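(* Let $q\in\mathrm{prob}(\{0,1\}^2)$. The set $E:=\{(\pi_1,\chi^{(2)}_{1|1}):(\pi,\chi)\in\Theta_2,\ \mu(\pi,\chi)=q\}$ is nonempty and equals the set of all $(\mathrm{Pr},\mathrm{Se}_2)\in[0,1]^2$ satisfying $\mathrm{Pr}-q_{+0}\le\mathrm{Pr}\,\mathrm{Se}_2\le q_{+1}$.
   Context: A subscript $+$ denotes summation over the replaced index: $q_{+0}=q_{00}+q_{10}$, $q_{+1}=q_{01}+q_{11}$. $\mathrm{prob}(\mathcal{X})$ is the set of probability densities on a finite set $\mathcal{X}$; $\mathrm{markov}(\mathcal{X},\mathcal{Y})$ the set of maps $(x,y)\mapsto p_{y|x}$ with $p_{\cdot|x}\in\mathrm{prob}(\mathcal{Y})$. $\Theta_2:=\mathrm{prob}(\{0,1\})\times\mathrm{markov}(\{0,1\},\{0,1\}^2)$, $\mu(\pi,\chi)_j:=\sum_{i=0}^1\pi_i\chi_{j|i}$ for $j\in\{0,1\}^2$, $\chi^{(2)}_{\iota|i}:=\chi_{0\iota|i}+\chi_{1\iota|i}$. *)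

theory Defs
  imports Main "HOL-Library.Product_Plus" Complex_Main
begin

text \<open>prob(X): probability densities on a finite set X (only values on X matter).\<close>
definition prob_dens :: "'a set \<Rightarrow> ('a \<Rightarrow> real) \<Rightarrow> bool" where
  "prob_dens X p \<longleftrightarrow> (\<forall>x\<in>X. 0 \<le> p x) \<and> (\<Sum>x\<in>X. p x) = 1"

text \<open>markov(X,Y): maps (x,y) to p(y|x), written k x y, with k x in prob(Y) for x in X.\<close>
definition markov :: "'a set \<Rightarrow> 'b set \<Rightarrow> ('a \<Rightarrow> 'b \<Rightarrow> real) \<Rightarrow> bool" where
  "markov X Y k \<longleftrightarrow> (\<forall>x\<in>X. prob_dens Y (k x))"

definition bits :: "nat set" where "bits = {0, 1}"

definition Theta2 :: "((nat \<Rightarrow> real) \<times> (nat \<Rightarrow> nat \<times> nat \<Rightarrow> real)) set" where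
  "Theta2 = {(\<pi>, \<chi>). prob_dens bits \<pi> \<and> markov bits (bits \<times> bits) \<chi>}"

definition mu :: "(nat \<Rightarrow> real) \<Rightarrow> (nat \<Rightarrow> nat \<times> nat \<Rightarrow> real) \<Rightarrow> nat \<times> nat \<Rightarrow> real" where
  "mu \<pi> \<chi> j = (\<Sum>i\<in>bits. \<pi> i * \<chi> i j)"

definition chi2 :: "(nat \<Rightarrow> nat \<times> nat \<Rightarrow> real) \<Rightarrow> nat \<Rightarrow> nat \<Rightarrow> real" where
  "chi2 \<chi> \<iota> i = \<chi> i (0, \<iota>) + \<chi> i (1, \<iota>)"

end

theory Submission
  imports Defs
begin

lemma sum_bits: "(\<Sum>i\<in>bits. f i) = f 0 + f (1::nat)" by (simp add: bits_def)
lemma sum_bits2: "(\<Sum>j\<in>bits\<times>bits. f j) = f (0,0) + f (0,1) + f (1,0) + f ((1::nat),(1::nat))"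
proof -
  have "bits \<times> bits = {(0,0),(0,1),(1,0),(1::nat,1::nat)}" by (auto simp: bits_def)
  then show ?thesis by (simp add: add.assoc)
qed

lemma bits2_eq: "bits \<times> bits = {(0,0),(0,1),(1,0),(1::nat,1::nat)}" by (auto simp: bits_def)

lemma prob_dens_bits2: "prob_dens (bits \<times> bits) f \<longleftrightarrow>
   f (0,0) \<ge> 0 \<and> f (0,1) \<ge> 0 \<and> f (1,0) \<ge> 0 \<and> f (1::nat,1::nat) \<ge> 0 \<and>
   f (0,0) + f (0,1) + f (1,0) + f (1,1) = 1"
  unfolding prob_dens_def sum_bits2 bits2_eq by auto

lemma markov_bits: "markov bits Y k \<longleftrightarrow> prob_dens Y (k 0) \<and> prob_dens Y (k (1::nat))"
  unfolding markov_def bits_def by auto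

lemma numeric:
  fixes q00 q01 q10 q11 P S :: real
  assumes q: "q00 \<ge> 0" "q01 \<ge> 0" "q10 \<ge> 0" "q11 \<ge> 0" "q00+q01+q10+q11 = 1"
    and P: "0 \<le> P" "P \<le> 1" and S: "0 \<le> S" "S \<le> 1"
    and c1: "P - (q00 + q10) \<le> P*S" and c2: "P*S \<le> q01 + q11"
  shows "\<exists>x00 x01 x10 x11 y00 y01 y10 y11. x00 \<ge> 0 \<and> x01 \<ge> 0 \<and> x10 \<ge> 0 \<and> x11 \<ge> 0
     \<and> y00 \<ge> 0 \<and> y01 \<ge> 0 \<and> y10 \<ge> 0 \<and> y11 \<ge> 0 \<and> x00+x01+x10+x11 = 1 \<and> y00+y01+y10+y11 = 1
     \<and> x01 + x11 = S \<and> (1-P)*y00 + P*x00 = q00 \<and> (1-P)*y01 + P*x01 = q01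
     \<and> (1-P)*y10 + P*x10 = q10 \<and> (1-P)*y11 + P*x11 = q11"
proof -
  define A where "A = q01 + q11"
  define B where "B = q00 + q10"
  have AB: "A + B = 1" "A \<ge> 0" "B \<ge> 0" using q by (auto simp: A_def B_def)
  define c01 where "c01 = (if A > 0 then q01/A else 1)"
  define c11 where "c11 = (if A > 0 then q11/A else 0)"
  define c00 where "c00 = (if B > 0 then q00/B else 1)"
  define c10 where "c10 = (if B > 0 then q10/B else 0)"
  have cA: "c01 \<ge> 0" "c11 \<ge> 0" "c01 + c11 = 1"
    using q AB by (auto simp: c01_def c11_def A_def add_divide_distrib[symmetric])
  have cB: "c00 \<ge> 0" "c10 \<ge> 0" "c00 + c10 = 1"
    using q AB by (auto simp: c00_def c10_def B_def add_divide_distrib[symmetric])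
  define x00 where "x00 = (1-S)*c00"
  define x10 where "x10 = (1-S)*c10"
  define x01 where "x01 = S*c01"
  define x11 where "x11 = S*c11"
  have le01: "P*x01 \<le> q01" and le11: "P*x11 \<le> q11"
  proof -
    have "P*x01 \<le> q01 \<and> P*x11 \<le> q11"
    proof (cases "A > 0")
      case True
      have "P*S*(q01/A) \<le> A*(q01/A)" "P*S*(q11/A) \<le> A*(q11/A)"
        using c2 q True unfolding A_def[symmetric]
        by (intro mult_right_mono; simp)+
      then show ?thesis using True by (simp add: x01_def x11_def c01_def c11_def)
    next
      case False
      then have "A = 0" using AB by simp
      moreover have "P*S \<ge> 0" using P S by simp
      ultimately have "P*S = 0" "q01 = 0" "q11 = 0" using c2 q unfolding A_def
        by linarith+
      have "x01 = S" "x11 = 0" using False by (simp_all add: x01_def x11_def c01_def c11_def)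
      then have "P*x01 = P*S" "P*x11 = 0" by simp_all
      then show ?thesis using \<open>P*S = 0\<close> \<open>q01 = 0\<close> \<open>q11 = 0\<close> by linarith
    qed
    then show "P*x01 \<le> q01" "P*x11 \<le> q11" by auto
  qed
  have le00: "P*x00 \<le> q00" and le10: "P*x10 \<le> q10"
  proof -
    have c1': "P*(1-S) \<le> B" using c1 by (simp add: B_def algebra_simps)
    have "P*x00 \<le> q00 \<and> P*x10 \<le> q10"
    proof (cases "B > 0")
      case True
      have "P*(1-S)*(q00/B) \<le> B*(q00/B)" "P*(1-S)*(q10/B) \<le> B*(q10/B)"
        using c1' q True
        by (intro mult_right_mono; simp)+
      then show ?thesis using True by (simp add: x00_def x10_def c00_def c10_def mult.assoc)
    next
      case False
      then have "B = 0" using AB by simp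
      moreover have "P*(1-S) \<ge> 0" using P S by simp
      ultimately have "P*(1-S) = 0" "q00 = 0" "q10 = 0" using c1' q unfolding B_def
        by linarith+
      have "x00 = 1-S" "x10 = 0" using False by (simp_all add: x00_def x10_def c00_def c10_def)
      then have "P*x00 = P*(1-S)" "P*x10 = 0" by simp_all
      then show ?thesis using \<open>P*(1-S) = 0\<close> \<open>q00 = 0\<close> \<open>q10 = 0\<close> by linarith
    qed
    then show "P*x00 \<le> q00" "P*x10 \<le> q10" by auto
  qed
  have xs: "x00 \<ge> 0" "x01 \<ge> 0" "x10 \<ge> 0" "x11 \<ge> 0" "x00+x01+x10+x11 = 1" "x01+x11 = S"
  proof -
    show "x00 \<ge> 0" "x01 \<ge> 0" "x10 \<ge> 0" "x11 \<ge> 0"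
      using cA cB S by (simp_all add: x00_def x01_def x10_def x11_def)
    have "x01+x11 = S*(c01+c11)" by (simp add: x01_def x11_def distrib_left)
    then show s: "x01+x11 = S" using cA by simp
    have "x00+x10 = (1-S)*(c00+c10)" by (simp add: x00_def x10_def distrib_left)
    then have "x00+x10 = 1-S" using cB by simp
    then show "x00+x01+x10+x11 = 1" using s by linarith
  qed
  show ?thesis
  proof (cases "P < 1")
    case True
    define y00 where "y00 = (q00 - P*x00)/(1-P)"
    define y01 where "y01 = (q01 - P*x01)/(1-P)"
    define y10 where "y10 = (q10 - P*x10)/(1-P)"
    define y11 where "y11 = (q11 - P*x11)/(1-P)"
    have "y00+y01+y10+y11 = (q00+q01+q10+q11 - P*(x00+x01+x10+x11))/(1-P)"
      unfolding y00_def y01_def y10_def y11_def add_divide_distrib[symmetric]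
      by (rule arg_cong[where f="\<lambda>t. t / (1-P)"]) (simp add: algebra_simps)
    then have ys: "y00+y01+y10+y11 = 1" using q xs True by simp
    show ?thesis
      apply (rule exI[of _ x00], rule exI[of _ x01], rule exI[of _ x10], rule exI[of _ x11])
      apply (rule exI[of _ y00], rule exI[of _ y01], rule exI[of _ y10], rule exI[of _ y11])
      using xs ys True le00 le01 le10 le11
      by (simp add: y00_def y01_def y10_def y11_def)
  next
    case False
    then have P1: "P = 1" using P by simp
    have "x00+x01+x10+x11 = q00+q01+q10+q11" using xs q by simp
    then have e: "x00 = q00" "x01 = q01" "x10 = q10" "x11 = q11"
      using le00 le01 le10 le11 P1 by auto
    show ?thesis
      apply (rule exI[of _ x00], rule exI[of _ x01], rule exI[of _ x10], rule exI[of _ x11])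
      apply (rule exI[of _ 1], rule exI[of _ 0], rule exI[of _ 0], rule exI[of _ 0])
      using xs e P1 by simp
  qed
qed

theorem lemma7:
  fixes q :: "nat \<times> nat \<Rightarrow> real"
  assumes "prob_dens (bits \<times> bits) q"
  defines "E \<equiv> {(\<pi> 1, chi2 \<chi> 1 1) | \<pi> \<chi>.
                   (\<pi>, \<chi>) \<in> Theta2 \<and> (\<forall>j\<in>bits \<times> bits. mu \<pi> \<chi> j = q j)}"
  shows "E \<noteq> {} \<and>
         E = {(Pr, Se2). Pr \<in> {0..1} \<and> Se2 \<in> {0..1} \<and>
                Pr - (q (0,0) + q (1,0)) \<le> Pr * Se2 \<and> Pr * Se2 \<le> q (0,1) + q (1,1)}"
proof -
  from assms(1) have q: "q (0,0) \<ge> 0" "q (0,1) \<ge> 0" "q (1,0) \<ge> 0" "q (1,1) \<ge> 0"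
     "q (0,0) + q (0,1) + q (1,0) + q (1,1) = 1"
    by (auto simp: prob_dens_def sum_bits2 bits_def)
  have sub1: "E \<subseteq> {(Pr, Se2). Pr \<in> {0..1} \<and> Se2 \<in> {0..1} \<and>
                Pr - (q (0,0) + q (1,0)) \<le> Pr * Se2 \<and> Pr * Se2 \<le> q (0,1) + q (1,1)}"
  proof
    fix z assume "z \<in> E"
    then obtain \<pi> \<chi> where z: "z = (\<pi> 1, chi2 \<chi> 1 1)" and T: "(\<pi>, \<chi>) \<in> Theta2"
      and m: "\<forall>j\<in>bits \<times> bits. mu \<pi> \<chi> j = q j" unfolding E_def by blast
    from T have Tp: "prob_dens bits \<pi>" and Tc: "markov bits (bits \<times> bits) \<chi>"
      by (simp_all add: Theta2_def)
    have pi: "\<pi> 0 \<ge> 0" "\<pi> 1 \<ge> 0" "\<pi> 0 + \<pi> 1 = 1"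
      using Tp unfolding prob_dens_def sum_bits by (simp_all add: bits_def)
    have C0: "prob_dens (bits \<times> bits) (\<chi> 0)" and C1: "prob_dens (bits \<times> bits) (\<chi> 1)"
      using Tc unfolding markov_bits by simp_all
    have c0: "\<chi> 0 (0,0) \<ge> 0" "\<chi> 0 (0,1) \<ge> 0" "\<chi> 0 (1,0) \<ge> 0" "\<chi> 0 (1,1) \<ge> 0"
      using C0 unfolding prob_dens_bits2 by simp_all
    have c: "\<chi> 1 (0,0) \<ge> 0" "\<chi> 1 (0,1) \<ge> 0" "\<chi> 1 (1,0) \<ge> 0" "\<chi> 1 (1,1) \<ge> 0"
      and ch1: "\<chi> 1 (0,0) + \<chi> 1 (0,1) + \<chi> 1 (1,0) + \<chi> 1 (1,1) = 1"
      using C1 unfolding prob_dens_bits2 by simp_all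
    have mm: "mu \<pi> \<chi> (0,0) = q (0,0)" "mu \<pi> \<chi> (0,1) = q (0,1)"
       "mu \<pi> \<chi> (1,0) = q (1,0)" "mu \<pi> \<chi> (1,1) = q (1,1)"
      using m unfolding bits2_eq by simp_all
    have m00: "\<pi> 0 * \<chi> 0 (0,0) + \<pi> 1 * \<chi> 1 (0,0) = q (0,0)"
      and m01: "\<pi> 0 * \<chi> 0 (0,1) + \<pi> 1 * \<chi> 1 (0,1) = q (0,1)"
      and m10: "\<pi> 0 * \<chi> 0 (1,0) + \<pi> 1 * \<chi> 1 (1,0) = q (1,0)"
      and m11: "\<pi> 0 * \<chi> 0 (1,1) + \<pi> 1 * \<chi> 1 (1,1) = q (1,1)"
      using mm unfolding mu_def sum_bits by simp_all
    have n0: "\<pi> 0 * \<chi> 0 (0,0) \<ge> 0" "\<pi> 0 * \<chi> 0 (0,1) \<ge> 0"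
       "\<pi> 0 * \<chi> 0 (1,0) \<ge> 0" "\<pi> 0 * \<chi> 0 (1,1) \<ge> 0"
      using pi c0 by simp_all
    have S: "chi2 \<chi> 1 1 = \<chi> 1 (0,1) + \<chi> 1 (1,1)" by (simp add: chi2_def)
    have e1: "\<pi> 1 * chi2 \<chi> 1 1 = \<pi> 1 * \<chi> 1 (0,1) + \<pi> 1 * \<chi> 1 (1,1)"
      unfolding chi2_def by (rule distrib_left)
    have e2: "\<pi> 1 = \<pi> 1 * \<chi> 1 (0,0) + \<pi> 1 * \<chi> 1 (0,1) + \<pi> 1 * \<chi> 1 (1,0) + \<pi> 1 * \<chi> 1 (1,1)"
      using ch1 by (metis distrib_left mult.right_neutral)
    show "z \<in> {(Pr, Se2). Pr \<in> {0..1} \<and> Se2 \<in> {0..1} \<and>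
                Pr - (q (0,0) + q (1,0)) \<le> Pr * Se2 \<and> Pr * Se2 \<le> q (0,1) + q (1,1)}"
    proof -
      have a: "\<pi> 1 \<in> {0..1}" using pi by auto
      have b: "chi2 \<chi> 1 1 \<in> {0..1}" using S c ch1 by auto
      have d: "\<pi> 1 - (q (0,0) + q (1,0)) \<le> \<pi> 1 * chi2 \<chi> 1 1"
        using e1 e2 m00 m10 n0 by linarith
      have f: "\<pi> 1 * chi2 \<chi> 1 1 \<le> q (0,1) + q (1,1)"
        using e1 m01 m11 n0 by linarith
      show ?thesis unfolding z using a b d f by blast
    qed
  qed
  have sub2: "{(Pr, Se2). Pr \<in> {0..1} \<and> Se2 \<in> {0..1} \<and>
                Pr - (q (0,0) + q (1,0)) \<le> Pr * Se2 \<and> Pr * Se2 \<le> q (0,1) + q (1,1)} \<subseteq> E"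
  proof clarify
    fix P S :: real
    assume "P \<in> {0..1}" "S \<in> {0..1}" and c1: "P - (q (0,0) + q (1,0)) \<le> P * S"
      and c2: "P * S \<le> q (0,1) + q (1,1)"
    then have P: "0 \<le> P" "P \<le> 1" and S: "0 \<le> S" "S \<le> 1" by auto
    obtain x00 x01 x10 x11 y00 y01 y10 y11 where X: "x00 \<ge> 0 \<and> x01 \<ge> 0 \<and> x10 \<ge> 0 \<and> x11 \<ge> 0
     \<and> y00 \<ge> 0 \<and> y01 \<ge> 0 \<and> y10 \<ge> 0 \<and> y11 \<ge> 0 \<and> x00+x01+x10+x11 = 1 \<and> y00+y01+y10+y11 = 1
     \<and> x01 + x11 = S \<and> (1-P)*y00 + P*x00 = q (0,0) \<and> (1-P)*y01 + P*x01 = q (0,1)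
     \<and> (1-P)*y10 + P*x10 = q (1,0) \<and> (1-P)*y11 + P*x11 = q (1,1)"
      using numeric[OF q P S c1 c2] by (elim exE) (erule that)
    define \<pi> :: "nat \<Rightarrow> real" where "\<pi> = (\<lambda>i. if i = 1 then P else 1 - P)"
    define \<chi> :: "nat \<Rightarrow> nat \<times> nat \<Rightarrow> real" where "\<chi> = (\<lambda>i j. if i = 1 then
       (if j = (0,0) then x00 else if j = (0,1) then x01 else if j = (1,0) then x10 else x11)
       else (if j = (0,0) then y00 else if j = (0,1) then y01 else if j = (1,0) then y10 else y11))"
    have chv: "\<chi> 1 (0,0) = x00" "\<chi> 1 (0,1) = x01" "\<chi> 1 (1,0) = x10" "\<chi> 1 (1,1) = x11"
      "\<chi> 0 (0,0) = y00" "\<chi> 0 (0,1) = y01" "\<chi> 0 (1,0) = y10" "\<chi> 0 (1,1) = y11"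
      by (simp_all add: \<chi>_def)
    have piv: "\<pi> 1 = P" "\<pi> 0 = 1 - P" by (simp_all add: \<pi>_def)
    have T: "(\<pi>, \<chi>) \<in> Theta2"
      unfolding Theta2_def markov_bits prob_dens_bits2
      using X P by (simp add: prob_dens_def sum_bits piv chv piv[simplified] chv[simplified] bits_def)
    have M: "\<forall>j\<in>bits \<times> bits. mu \<pi> \<chi> j = q j"
      unfolding bits2_eq using X
      by (simp add: mu_def sum_bits piv chv piv[simplified] chv[simplified] algebra_simps)
    have "chi2 \<chi> 1 1 = S" using X unfolding chi2_def chv by simp
    moreover have "\<pi> 1 = P" by (simp add: \<pi>_def)
    ultimately have "(P, S) = (\<pi> 1, chi2 \<chi> 1 1)" by simp
    then show "(P, S) \<in> E" unfolding E_def using T M by blast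
  qed
  have "(0::real, 0::real) \<in> E" using sub2 q by auto
  then show ?thesis using sub1 sub2 by blast
qed

end
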